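(* Let $\mathcal{X}$ be an input space, $\mathcal{Y}=\{0,1,\varnothing\}$, $\mathcal{H}$ a class of functions $\mathcal{X}\to\{0,1\}$, and $Z=(X,Y)\sim P$ on $\mathcal{X}\times\mathcal{Y}$ with $\Pr[Y=y]>0$ for $y\in\{0,1\}$. Let $Z_1,\dots,Z_n$ be an i.i.d. sample from $P$ and $Z'_1,\dots,Z'_n$ an independent i.i.d. "ghost sample" from $P$. Let $R(h)=\tfrac12(\Pr[h(X)=1\mid Y=0]+\Pr[h(X)=0\mid Y=1])$, let $R_n(h)$ be the empirical balanced error on $Z_1,\dots,Z_n$, and $R'_n(h)$ the empirical balanced error on the ghost sample, where for a sample $(x_i,y_i)_{i=1}^n$ the empirical balanced error is $$\frac12\left(\frac{\sum_i\mathbb{1}[h(x_i)=1]\mathbb{1}[y_i=0]}{\sum_i\mathbb{1}[y_i=0]}+\frac{\sum_i\mathbb{1}[h(x_i)=0]\mathbb{1}[y_i=1]}{\sum_i\mathbb{1}[y_i=1]}\right).$$ Then for any $t>0$ with $nt^2\ge \dfrac{32\log 12}{\min_{y\in\{0,1\}}\Pr[Y=y]}$, $$\Pr\Big[\sup_{h\in\mathcal{H}}R(h)-R_n(h)>t\Big]\le 2\,\Pr\Big[\sup_{h\in\mathcal{H}}R'_n(h)-R_n(h)>t/2\Big].$$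
   Context: $\varnothing$ is an abstention symbol; points with label $\varnothing$ do not enter the balanced errors. *)

theory Defs
  imports "HOL-Probability.Probability"
begin

datatype label = L0 | L1 | Abst

definition prob_label :: "('a \<times> label) measure \<Rightarrow> label \<Rightarrow> real" where
  "prob_label P y = measure P {z \<in> space P. snd z = y}"

text \<open>Population balanced error R(h) (h x = True means h(x) = 1).\<close>
definition bal_risk :: "('a \<times> label) measure \<Rightarrow> ('a \<Rightarrow> bool) \<Rightarrow> real" where
  "bal_risk P h = (1/2) *
     (measure P {z \<in> space P. h (fst z) \<and> snd z = L0} / prob_label P L0
    + measure P {z \<in> space P. \<not> h (fst z) \<and> snd z = L1} / prob_label P L1)"

definition emp_bal_risk :: "nat \<Rightarrow> (nat \<Rightarrow> 'a \<times> label) \<Rightarrow> ('a \<Rightarrow> bool) \<Rightarrow> real" where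
  "emp_bal_risk n zs h = (1/2) *
     (real (card {i\<in>{..<n}. h (fst (zs i)) \<and> snd (zs i) = L0})
        / real (card {i\<in>{..<n}. snd (zs i) = L0})
    + real (card {i\<in>{..<n}. \<not> h (fst (zs i)) \<and> snd (zs i) = L1})
        / real (card {i\<in>{..<n}. snd (zs i) = L1}))"

abbreviation sample_measure :: "nat \<Rightarrow> ('a \<times> label) measure \<Rightarrow> (nat \<Rightarrow> 'a \<times> label) measure" where
  "sample_measure n P \<equiv> PiM {..<n} (\<lambda>_. P)"

end

theory Submission
  imports Defs
begin

lemma pi_int_two:
  fixes f g :: "'z \<Rightarrow> real"
  assumes P: "prob_space P" and fi: "integrable P f" and gi: "integrable P g"
    and ij: "i < (n::nat)" "j < n" "i \<noteq> j"
  shows "(\<integral>x. f (x i) * g (x j) \<partial>PiM {..<n} (\<lambda>_. P)) = (\<integral>z. f z \<partial>P) * (\<integral>z. g z \<partial>P)"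
proof -
  interpret product_sigma_finite "\<lambda>_::nat. P"
    by (simp add: product_sigma_finite_def P prob_space_imp_sigma_finite)
  interpret prob_space P by fact
  have one1: "integral\<^sup>L P (\<lambda>_. 1::real) = 1" by (simp add: prob_space.prob_space[OF P])
  define F where "F k = (if k = i then f else if k = j then g else (\<lambda>_. 1::real))" for k
  have eq: "(\<Prod>k\<in>{..<n}. F k (x k)) = f (x i) * g (x j)" for x
  proof -
    have "(\<Prod>k\<in>{..<n}. F k (x k)) = (\<Prod>k\<in>{i,j}. F k (x k))"
      using ij by (intro prod.mono_neutral_right) (auto simp: F_def)
    also have "\<dots> = f (x i) * g (x j)" using ij by (simp add: F_def)
    finally show ?thesis .
  qed
  have "(\<integral>x. (\<Prod>k\<in>{..<n}. F k (x k)) \<partial>PiM {..<n} (\<lambda>_. P)) = (\<Prod>k\<in>{..<n}. integral\<^sup>L P (F k))"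
    by (intro product_integral_prod) (auto simp: F_def fi gi intro: finite_lessThan)
  also have "\<dots> = (\<Prod>k\<in>{i,j}. integral\<^sup>L P (F k))"
    using ij by (intro prod.mono_neutral_right) (simp_all add: F_def one1 subset_iff prob_space.prob_space[OF P])
  also have "\<dots> = (\<integral>z. f z \<partial>P) * (\<integral>z. g z \<partial>P)" using ij by (simp add: F_def)
  finally show ?thesis by (simp add: eq)
qed

lemma pi_int_one:
  fixes f :: "'z \<Rightarrow> real"
  assumes P: "prob_space P" and fi: "integrable P f" and i: "i < (n::nat)"
  shows "(\<integral>x. f (x i) \<partial>PiM {..<n} (\<lambda>_. P)) = (\<integral>z. f z \<partial>P)"
proof -
  interpret product_sigma_finite "\<lambda>_::nat. P"
    by (simp add: product_sigma_finite_def P prob_space_imp_sigma_finite)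
  interpret prob_space P by fact
  have one1: "integral\<^sup>L P (\<lambda>_. 1::real) = 1" by (simp add: prob_space.prob_space[OF P])
  define F where "F k = (if k = i then f else (\<lambda>_. 1::real))" for k
  have eq: "(\<Prod>k\<in>{..<n}. F k (x k)) = f (x i)" for x
  proof -
    have "(\<Prod>k\<in>{..<n}. F k (x k)) = (\<Prod>k\<in>{i}. F k (x k))"
      using i by (intro prod.mono_neutral_right) (auto simp: F_def)
    also have "\<dots> = f (x i)" by (simp add: F_def)
    finally show ?thesis .
  qed
  have "(\<integral>x. (\<Prod>k\<in>{..<n}. F k (x k)) \<partial>PiM {..<n} (\<lambda>_. P)) = (\<Prod>k\<in>{..<n}. integral\<^sup>L P (F k))"
    by (intro product_integral_prod) (auto simp: F_def fi intro: finite_lessThan)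
  also have "\<dots> = (\<Prod>k\<in>{i}. integral\<^sup>L P (F k))"
    using i by (intro prod.mono_neutral_right) (simp_all add: F_def one1 subset_iff prob_space.prob_space[OF P])
  also have "\<dots> = (\<integral>z. f z \<partial>P)" by (simp add: F_def)
  finally show ?thesis by (simp add: eq)
qed

lemma pi_sum_sq:
  fixes f :: "'z \<Rightarrow> real"
  assumes P: "prob_space P" and fm[measurable]: "f \<in> borel_measurable P"
    and fb: "\<And>z. z \<in> space P \<Longrightarrow> \<bar>f z\<bar> \<le> 1" and f0: "(\<integral>z. f z \<partial>P) = 0"
  shows "(\<integral>x. (\<Sum>i<n. f (x i))\<^sup>2 \<partial>PiM {..<n} (\<lambda>_. P)) = real n * (\<integral>z. (f z)\<^sup>2 \<partial>P)"
proof -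
  interpret prob_space P by fact
  interpret M: prob_space "PiM {..<n} (\<lambda>_. P)" by (intro prob_space_PiM P)
  have fi: "integrable P f"
    by (rule integrable_const_bound[where B=1]) (use fb in auto)
  have ff: "\<bar>f z * f z\<bar> \<le> 1" if "z \<in> space P" for z
  proof -
    have "(f z)\<^sup>2 \<le> 1" using fb[OF that] by (simp add: abs_square_le_1)
    then show ?thesis by (simp add: power2_eq_square)
  qed
  have f2i: "integrable P (\<lambda>z. f z * f z)"
    by (rule integrable_const_bound[where B=1]) (use ff in \<open>auto intro!: AE_I2\<close>)
  have mi: "(\<lambda>x. f (x i)) \<in> borel_measurable (PiM {..<n} (\<lambda>_. P))" if "i < n" for i
    using measurable_compose[OF measurable_component_singleton[of i "{..<n}" "\<lambda>_. P"] fm] that by simp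
  have sp: "x i \<in> space P" if "x \<in> space (PiM {..<n} (\<lambda>_. P))" "i < n" for x i
    using that by (auto simp: space_PiM)
  have ti: "integrable (PiM {..<n} (\<lambda>_. P)) (\<lambda>x. f (x i) * f (x j))" if "i < n" "j < n" for i j
  proof (rule M.integrable_const_bound[where B=1])
    show "AE x in PiM {..<n} (\<lambda>_. P). norm (f (x i) * f (x j)) \<le> 1"
    proof (rule AE_I2)
      fix x assume x: "x \<in> space (PiM {..<n} (\<lambda>_. P))"
      have "\<bar>f (x i)\<bar> \<le> 1" "\<bar>f (x j)\<bar> \<le> 1" using fb sp x that by auto
      then show "norm (f (x i) * f (x j)) \<le> 1"
        unfolding real_norm_def abs_mult by (intro mult_le_one) auto
    qed
    show "(\<lambda>x. f (x i) * f (x j)) \<in> borel_measurable (PiM {..<n} (\<lambda>_. P))"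
      using mi that by (intro borel_measurable_times) auto
  qed
  have "(\<integral>x. (\<Sum>i<n. f (x i))\<^sup>2 \<partial>PiM {..<n} (\<lambda>_. P)) =
        (\<integral>x. (\<Sum>i<n. \<Sum>j<n. f (x i) * f (x j)) \<partial>PiM {..<n} (\<lambda>_. P))"
    by (simp add: power2_eq_square sum_product)
  also have "\<dots> = (\<Sum>i<n. \<integral>x. (\<Sum>j<n. f (x i) * f (x j)) \<partial>PiM {..<n} (\<lambda>_. P))"
    by (rule Bochner_Integration.integral_sum) (auto intro!: Bochner_Integration.integrable_sum ti)
  also have "\<dots> = (\<Sum>i<n. \<Sum>j<n. \<integral>x. f (x i) * f (x j) \<partial>PiM {..<n} (\<lambda>_. P))"
    by (intro sum.cong refl Bochner_Integration.integral_sum) (auto intro!: ti)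
  also have "\<dots> = (\<Sum>i<n. \<integral>z. f z * f z \<partial>P)"
  proof (rule sum.cong[OF refl])
    fix i assume i: "i \<in> {..<n}"
    have "(\<Sum>j<n. \<integral>x. f (x i) * f (x j) \<partial>PiM {..<n} (\<lambda>_. P)) =
          (\<Sum>j\<in>{i}. \<integral>x. f (x i) * f (x j) \<partial>PiM {..<n} (\<lambda>_. P))"
      using i by (intro sum.mono_neutral_right) (auto simp: pi_int_two[OF P fi fi] f0)
    also have "\<dots> = (\<integral>z. f z * f z \<partial>P)"
      using pi_int_one[OF P f2i, of i n] i by simp
    finally show "(\<Sum>j<n. \<integral>x. f (x i) * f (x j) \<partial>PiM {..<n} (\<lambda>_. P)) = (\<integral>z. f z * f z \<partial>P)" .
  qed
  finally show ?thesis by (simp add: power2_eq_square)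
qed


lemma conc:
  fixes P :: "'z measure" and B C :: "'z set" and n :: nat and s :: real
  assumes P: "prob_space P" and B[measurable]: "B \<in> sets P" and C[measurable]: "C \<in> sets P" and BC: "B \<subseteq> C"
    and p: "measure P C > 0" and s: "s > 0" and qs: "measure P B / measure P C > s"
    and ns: "real n * measure P C * s\<^sup>2 \<ge> 4"
  shows "measure (PiM {..<n} (\<lambda>_. P)) {x \<in> space (PiM {..<n} (\<lambda>_. P)).
           (\<Sum>i<n. indicator B (x i) - (measure P B / measure P C - s) * indicator C (x i)) \<le> (0::real)} \<le> 1/4"
proof -
  interpret prob_space P by fact
  interpret M: prob_space "PiM {..<n} (\<lambda>_. P)" by (intro prob_space_PiM P)
  define p where "p = measure P C"
  define q where "q = measure P B / p"
  define r where "r = q - s"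
  have mBC: "measure P B \<le> p" unfolding p_def using BC by (intro finite_measure_mono) auto
  have q1: "q \<le> 1" using mBC p unfolding q_def p_def by (simp add: divide_le_eq)
  have r0: "0 < r" using qs unfolding r_def q_def p_def by simp
  have r1: "r < 1" using q1 s unfolding r_def by simp
  have mB: "measure P B = q * p" unfolding q_def using p p_def by simp
  define V where "V z = indicator B z - r * indicator C z" for z :: 'z
  have Vm[measurable]: "V \<in> borel_measurable P" unfolding V_def by measurable
  have Vi: "integrable P V" unfolding V_def by (intro Bochner_Integration.integrable_diff integrable_mult_right integrable_real_indicator) (auto simp: less_top[symmetric])
  have Bi: "integrable P (indicator B :: 'z \<Rightarrow> real)" and Ci: "integrable P (indicator C :: 'z \<Rightarrow> real)"
    by (intro integrable_real_indicator; simp add: less_top[symmetric])+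
  have "(\<integral>z. V z \<partial>P) = measure P B - r * p"
    unfolding V_def p_def using Bi Ci by (simp add: Bochner_Integration.integral_diff)
  then have EV: "(\<integral>z. V z \<partial>P) = s * p" using mB unfolding r_def by (simp add: algebra_simps)
  have p1: "p \<le> 1" unfolding p_def by simp
  have sps: "s * p \<le> s" using p1 s by (simp add: mult_left_le)
  have sp: "0 < s * p" "s * p \<le> 1" "r + s * p \<le> 1"
    using s p[folded p_def] sps r0 q1 unfolding r_def by (simp, linarith, linarith)
  define f where "f z = V z - s * p" for z
  have fm[measurable]: "f \<in> borel_measurable P" unfolding f_def by measurable
  have fb: "\<bar>f z\<bar> \<le> 1" for z
  proof (cases "z \<in> B")
    case True
    then have "z \<in> C" using BC by auto
    then show ?thesis using True sp r0 unfolding f_def V_def by auto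
  next
    case False
    then show ?thesis using sp r0 r1 unfolding f_def V_def by (cases "z \<in> C") auto
  qed
  have f0: "(\<integral>z. f z \<partial>P) = 0"
    unfolding f_def using Vi EV by (simp add: Bochner_Integration.integral_diff prob_space)
  have V2b: "(V z)\<^sup>2 \<le> indicator C z" for z
  proof (cases "z \<in> C")
    case True
    have "\<bar>V z\<bar> \<le> 1" using True r0 r1 unfolding V_def by (cases "z \<in> B") auto
    then show ?thesis using True by (simp add: abs_square_le_1)
  next
    case False
    then have "z \<notin> B" using BC by auto
    then show ?thesis using False unfolding V_def by simp
  qed
  have V21: "(V z)\<^sup>2 \<le> 1" for z
    by (rule order_trans[OF V2b]) (simp add: indicator_def)
  have V2i: "integrable P (\<lambda>z. (V z)\<^sup>2)"
    by (rule integrable_const_bound[where B=1]) (use V21 in auto)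
  have "(\<integral>z. (f z)\<^sup>2 \<partial>P) = variance V" unfolding f_def EV ..
  also have "\<dots> = (\<integral>z. (V z)\<^sup>2 \<partial>P) - (expectation V)\<^sup>2" by (rule variance_eq[OF Vi V2i])
  also have "\<dots> \<le> (\<integral>z. (V z)\<^sup>2 \<partial>P)" by simp
  also have "\<dots> \<le> (\<integral>z. indicator C z \<partial>P)" by (intro integral_mono V2i Ci V2b)
  also have "\<dots> = p" unfolding p_def by simp
  finally have f2: "(\<integral>z. (f z)\<^sup>2 \<partial>P) \<le> p" .
  define S where "S x = (\<Sum>i<n. f (x i))" for x
  have mi: "(\<lambda>x. f (x i)) \<in> borel_measurable (PiM {..<n} (\<lambda>_. P))" if "i < n" for i
    using measurable_compose[OF measurable_component_singleton[of i "{..<n}" "\<lambda>_. P"] fm] that by simp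
  have Sm: "S \<in> borel_measurable (PiM {..<n} (\<lambda>_. P))"
    unfolding S_def by (intro borel_measurable_sum) (use mi in auto)
  have fii: "integrable (PiM {..<n} (\<lambda>_. P)) (\<lambda>x. f (x i))" if "i < n" for i
    by (rule M.integrable_const_bound[where B=1]) (use fb mi that in auto)
  have ES: "M.expectation S = 0"
    unfolding S_def using fii
    by (simp add: Bochner_Integration.integral_sum pi_int_one[OF P integrable_const_bound[where B=1]] f0 fb)
  have Sb: "(S x)\<^sup>2 \<le> (real n)\<^sup>2" for x
  proof -
    have "\<bar>S x\<bar> \<le> (\<Sum>i<n. \<bar>f (x i)\<bar>)" unfolding S_def by (rule sum_abs)
    also have "\<dots> \<le> (\<Sum>i<n. 1)" by (intro sum_mono fb)
    finally have "\<bar>S x\<bar> \<le> real n" by simp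
    then show ?thesis by (metis power2_abs power_mono abs_ge_zero)
  qed
  have S2i: "integrable (PiM {..<n} (\<lambda>_. P)) (\<lambda>x. (S x)\<^sup>2)"
    by (rule M.integrable_const_bound[where B="(real n)\<^sup>2"]) (use Sb Sm in auto)
  have n0: "n > 0" using ns by (cases n) auto
  have a: "0 < real n * s * p" using n0 sp by (simp add: mult.assoc)
  have VS: "(\<Sum>i<n. indicator B (x i) - (measure P B / measure P C - s) * indicator C (x i)) = S x + real n * (s * p)" for x
    unfolding S_def f_def V_def r_def q_def p_def by (simp add: sum_subtractf)
  have var: "M.variance S \<le> real n * p"
  proof -
    have "M.variance S = (\<integral>x. (\<Sum>i<n. f (x i))\<^sup>2 \<partial>PiM {..<n} (\<lambda>_. P))"
      unfolding ES S_def by simp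
    also have "\<dots> = real n * (\<integral>z. (f z)\<^sup>2 \<partial>P)" by (rule pi_sum_sq[OF P fm fb f0])
    also have "\<dots> \<le> real n * p" using f2 by (simp add: mult_left_mono)
    finally show ?thesis .
  qed
  have "measure (PiM {..<n} (\<lambda>_. P)) {x \<in> space (PiM {..<n} (\<lambda>_. P)).
           (\<Sum>i<n. indicator B (x i) - (measure P B / measure P C - s) * indicator C (x i)) \<le> (0::real)}
      \<le> measure (PiM {..<n} (\<lambda>_. P)) {x \<in> space (PiM {..<n} (\<lambda>_. P)). real n * s * p \<le> \<bar>S x - M.expectation S\<bar>}"
  proof (rule M.finite_measure_mono)
    show "{x \<in> space (PiM {..<n} (\<lambda>_. P)). real n * s * p \<le> \<bar>S x - M.expectation S\<bar>} \<in> sets (PiM {..<n} (\<lambda>_. P))"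
      using Sm by measurable
  qed (use VS ES in auto)
  also have "\<dots> \<le> M.variance S / (real n * s * p)\<^sup>2"
    by (rule M.Chebyshev_inequality[OF Sm S2i a])
  also have "\<dots> \<le> real n * p / (real n * s * p)\<^sup>2"
    by (intro divide_right_mono var) simp
  also have "\<dots> = 1 / (real n * p * s\<^sup>2)"
    using n0 sp by (simp add: power2_eq_square field_simps)
  also have "\<dots> \<le> 1 / 4"
    using ns unfolding p_def by (intro divide_left_mono) auto
  finally show ?thesis .
qed

lemma F_meas:
  fixes n :: nat
  fixes P :: "'z measure" and c :: real
  assumes P: "prob_space P" and B[measurable]: "B \<in> sets P" and C[measurable]: "C \<in> sets P"
  shows "{x \<in> space (PiM {..<n} (\<lambda>_. P)). (\<Sum>i<n. indicator B (x i) - c * indicator C (x i)) \<le> (0::real) \<and> Q}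
           \<in> sets (PiM {..<n} (\<lambda>_. P))"
proof -
  have gm: "(\<lambda>z. indicator B z - c * indicator C z :: real) \<in> borel_measurable P" by measurable
  have mi: "(\<lambda>x. indicator B (x i) - c * indicator C (x i) :: real) \<in> borel_measurable (PiM {..<n} (\<lambda>_. P))" if "i < n" for i
    using measurable_compose[OF measurable_component_singleton[of i "{..<n}" "\<lambda>_. P"] gm] that by simp
  have Sm[measurable]: "(\<lambda>x. \<Sum>i<n. indicator B (x i) - c * indicator C (x i) :: real) \<in> borel_measurable (PiM {..<n} (\<lambda>_. P))"
    by (intro borel_measurable_sum) (use mi in auto)
  show ?thesis by measurable
qed

lemma card_sum_ind:
  assumes "\<And>i. i < (n::nat) \<Longrightarrow> x i \<in> space P"
  shows "real (card {i\<in>{..<n}. Q (x i)}) = (\<Sum>i<n. indicator {z \<in> space P. Q z} (x i))"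
proof -
  have "(\<Sum>i<n. indicator {z \<in> space P. Q z} (x i) :: real) = (\<Sum>i<n. if Q (x i) then 1 else 0)"
    using assms by (intro sum.cong) (auto simp: indicator_def)
  also have "\<dots> = (\<Sum>i\<in>{i\<in>{..<n}. Q (x i)}. 1)" by (rule sum.inter_filter[symmetric]) simp
  finally show ?thesis by simp
qed

lemma ratio_aux:
  fixes a c :: nat and r :: real
  assumes "a \<le> c" "real a / real c < r"
  shows "real a - r * real c \<le> 0 \<and> r > 0"
proof (cases "c = 0")
  case True then show ?thesis using assms by simp
next
  case False
  then have "real a < r * real c" using assms by (simp add: divide_less_eq)
  moreover have "0 \<le> real a / real c" by simp
  ultimately show ?thesis using assms by linarith
qed

lemma ratio_le1:
  fixes a c :: nat
  assumes "a \<le> c"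
  shows "real a / real c \<le> 1" "0 \<le> real a / real c"
  using assms by (auto simp: divide_le_eq)


lemma emp_bnd: "0 \<le> emp_bal_risk n x h \<and> emp_bal_risk n x h \<le> 1"
proof -
  have c1: "card {i\<in>{..<n}. h (fst (x i)) \<and> snd (x i) = L0} \<le> card {i\<in>{..<n}. snd (x i) = L0}"
    by (intro card_mono) auto
  have c2: "card {i\<in>{..<n}. \<not> h (fst (x i)) \<and> snd (x i) = L1} \<le> card {i\<in>{..<n}. snd (x i) = L1}"
    by (intro card_mono) auto
  show ?thesis unfolding emp_bal_risk_def using ratio_le1[OF c1] ratio_le1[OF c2] by simp
qed

lemma ln12: "ln (12::real) \<ge> 1/2"
proof -
  have "exp (1/2::real) \<le> exp 1" by simp
  also have "\<dots> \<le> 12" using exp_le by simp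
  finally have "ln (exp (1/2::real)) \<le> ln 12" by (subst ln_le_cancel_iff) auto
  then show ?thesis by simp
qed

theorem lemma2:
  fixes MX :: "'a measure" and P :: "('a \<times> label) measure"
    and H :: "('a \<Rightarrow> bool) set" and n :: nat and t :: real
  assumes "prob_space P"
    and "sets P = sets (MX \<Otimes>\<^sub>M count_space UNIV)"
    and "H \<subseteq> MX \<rightarrow>\<^sub>M count_space UNIV"
    and "prob_label P L0 > 0" and "prob_label P L1 > 0"
    and "t > 0"
    and "real n * t\<^sup>2 \<ge> 32 * ln 12 / min (prob_label P L0) (prob_label P L1)"
    and "{zs \<in> space (sample_measure n P). (SUP h\<in>H. bal_risk P h - emp_bal_risk n zs h) > t}
           \<in> sets (sample_measure n P)"
    and "{p \<in> space (sample_measure n P \<Otimes>\<^sub>M sample_measure n P).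
            (SUP h\<in>H. emp_bal_risk n (snd p) h - emp_bal_risk n (fst p) h) > t / 2}
           \<in> sets (sample_measure n P \<Otimes>\<^sub>M sample_measure n P)"
  shows "measure (sample_measure n P)
           {zs \<in> space (sample_measure n P). (SUP h\<in>H. bal_risk P h - emp_bal_risk n zs h) > t}
         \<le> 2 * measure (sample_measure n P \<Otimes>\<^sub>M sample_measure n P)
           {p \<in> space (sample_measure n P \<Otimes>\<^sub>M sample_measure n P).
            (SUP h\<in>H. emp_bal_risk n (snd p) h - emp_bal_risk n (fst p) h) > t / 2}"
proof -
  note P = assms(1)
  interpret P: prob_space P by fact
  let ?M = "sample_measure n P"
  interpret M: prob_space ?M by (intro prob_space_PiM P)
  interpret MM: pair_prob_space ?M ?M by unfold_locales
  define A where "A = {zs \<in> space ?M. (SUP h\<in>H. bal_risk P h - emp_bal_risk n zs h) > t}"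
  define G where "G = {p \<in> space (?M \<Otimes>\<^sub>M ?M).
            (SUP h\<in>H. emp_bal_risk n (snd p) h - emp_bal_risk n (fst p) h) > t / 2}"
  have A: "A \<in> sets ?M" using assms(8) unfolding A_def .
  have G: "G \<in> sets (?M \<Otimes>\<^sub>M ?M)" using assms(9) unfolding G_def .
  have fstm: "fst \<in> P \<rightarrow>\<^sub>M MX"
    by (subst measurable_cong_sets[OF assms(2) refl]) simp
  have sndm[measurable]: "snd \<in> P \<rightarrow>\<^sub>M count_space UNIV"
    by (subst measurable_cong_sets[OF assms(2) refl]) simp
  have Cs: "{z \<in> space P. snd z = y} \<in> sets P" for y by measurable
  have Bs: "{z \<in> space P. h (fst z) \<and> snd z = y} \<in> sets P" "{z \<in> space P. \<not> h (fst z) \<and> snd z = y} \<in> sets P"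
    if "h \<in> H" for h y
  proof -
    have hm: "h \<in> MX \<rightarrow>\<^sub>M count_space UNIV" using that assms(3) by auto
    have [measurable]: "(\<lambda>z. h (fst z)) \<in> P \<rightarrow>\<^sub>M count_space UNIV"
      using measurable_compose[OF fstm hm] by simp
    show "{z \<in> space P. h (fst z) \<and> snd z = y} \<in> sets P" by measurable
    show "{z \<in> space P. \<not> h (fst z) \<and> snd z = y} \<in> sets P" by measurable
  qed
  define F where "F B C = {x \<in> space ?M. (\<Sum>i<n. indicator B (x i) - (measure P B / measure P C - t/2) * indicator C (x i)) \<le> (0::real)
       \<and> measure P B / measure P C > t/2}" for B C
  define m where "m = min (prob_label P L0) (prob_label P L1)"
  have m0: "m > 0" using assms(4,5) unfolding m_def by simp
  have nm: "real n * t\<^sup>2 * m \<ge> 16"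
  proof -
    have "32 * ln 12 / m \<le> real n * t\<^sup>2" using assms(7) unfolding m_def .
    then have "32 * ln 12 \<le> real n * t\<^sup>2 * m" using m0 by (simp add: divide_le_eq)
    then show ?thesis using ln12 by linarith
  qed
  have Fgood: "F B C \<in> sets ?M \<and> measure ?M (F B C) \<le> 1/4"
    if B: "B \<in> sets P" and C: "C \<in> sets P" and BC: "B \<subseteq> C" and mC: "measure P C \<ge> m" for B C
  proof
    show "F B C \<in> sets ?M" unfolding F_def by (rule F_meas[OF P B C])
    show "measure ?M (F B C) \<le> 1/4"
    proof (cases "measure P B / measure P C > t/2")
      case True
      have "real n * t\<^sup>2 * m \<le> real n * t\<^sup>2 * measure P C" using mC by (intro mult_left_mono) auto
      then have ns: "real n * measure P C * (t/2)\<^sup>2 \<ge> 4" using nm by (simp add: power2_eq_square field_simps)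
      have "F B C = {x \<in> space ?M. (\<Sum>i<n. indicator B (x i) - (measure P B / measure P C - t/2) * indicator C (x i)) \<le> (0::real)}"
        unfolding F_def using True by simp
      then show ?thesis using conc[OF P B C BC _ _ True ns] m0 mC assms(6) by simp
    next
      case False
      then have "F B C = {}" unfolding F_def by simp
      then show ?thesis by simp
    qed
  qed
  define C0 where "C0 = {z \<in> space P. snd z = L0}"
  define C1 where "C1 = {z \<in> space P. snd z = L1}"
  define B0 where "B0 h = {z \<in> space P. h (fst z) \<and> snd z = L0}" for h :: "'a \<Rightarrow> bool"
  define B1 where "B1 h = {z \<in> space P. \<not> h (fst z) \<and> snd z = L1}" for h :: "'a \<Rightarrow> bool"
  have pl: "prob_label P L0 = measure P C0" "prob_label P L1 = measure P C1"
    unfolding prob_label_def C0_def C1_def by simp_all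
  have bal: "bal_risk P h = 1/2 * (measure P (B0 h) / measure P C0 + measure P (B1 h) / measure P C1)" for h
    unfolding bal_risk_def B0_def B1_def pl[symmetric] by simp
  have F0: "F (B0 h) C0 \<in> sets ?M \<and> measure ?M (F (B0 h) C0) \<le> 1/4" if "h \<in> H" for h
    by (rule Fgood) (use Bs[OF that] Cs pl in \<open>auto simp: B0_def C0_def m_def\<close>)
  have F1: "F (B1 h) C1 \<in> sets ?M \<and> measure ?M (F (B1 h) C1) \<le> 1/4" if "h \<in> H" for h
    by (rule Fgood) (use Bs[OF that] Cs pl in \<open>auto simp: B1_def C1_def m_def\<close>)
  have balb: "bal_risk P h \<le> 1" if "h \<in> H" for h
  proof -
    have "measure P (B0 h) \<le> measure P C0"
      using Cs by (intro P.finite_measure_mono) (auto simp: B0_def C0_def)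
    then have 1: "measure P (B0 h) / measure P C0 \<le> 1" using assms(4) pl by simp
    have "measure P (B1 h) \<le> measure P C1"
      using Cs by (intro P.finite_measure_mono) (auto simp: B1_def C1_def)
    then have 2: "measure P (B1 h) / measure P C1 \<le> 1" using assms(5) pl by simp
    show ?thesis unfolding bal using 1 2 by simp
  qed
  have point: "y \<in> F (B0 h) C0 \<union> F (B1 h) C1"
    if y: "y \<in> space ?M" and h: "h \<in> H" and lt: "emp_bal_risk n y h < bal_risk P h - t/2" for y h
  proof -
    have ys: "y i \<in> space P" if "i < n" for i using y that by (auto simp: space_PiM)
    define a0 where "a0 = card {i\<in>{..<n}. h (fst (y i)) \<and> snd (y i) = L0}"
    define c0 where "c0 = card {i\<in>{..<n}. snd (y i) = L0}"
    define a1 where "a1 = card {i\<in>{..<n}. \<not> h (fst (y i)) \<and> snd (y i) = L1}"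
    define c1 where "c1 = card {i\<in>{..<n}. snd (y i) = L1}"
    have ac0: "a0 \<le> c0" unfolding a0_def c0_def by (intro card_mono) auto
    have ac1: "a1 \<le> c1" unfolding a1_def c1_def by (intro card_mono) auto
    have sa0: "real a0 = (\<Sum>i<n. indicator (B0 h) (y i))"
      unfolding a0_def B0_def using card_sum_ind[of n y P "\<lambda>z. h (fst z) \<and> snd z = L0"] ys by simp
    have sa1: "real a1 = (\<Sum>i<n. indicator (B1 h) (y i))"
      unfolding a1_def B1_def using card_sum_ind[of n y P "\<lambda>z. \<not> h (fst z) \<and> snd z = L1"] ys by simp
    have sc0: "real c0 = (\<Sum>i<n. indicator C0 (y i))"
      unfolding c0_def C0_def using card_sum_ind[of n y P "\<lambda>z. snd z = L0"] ys by simp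
    have sc1: "real c1 = (\<Sum>i<n. indicator C1 (y i))"
      unfolding c1_def C1_def using card_sum_ind[of n y P "\<lambda>z. snd z = L1"] ys by simp
    have emp: "emp_bal_risk n y h = 1/2 * (real a0 / real c0 + real a1 / real c1)"
      unfolding emp_bal_risk_def a0_def a1_def c0_def c1_def by simp
    have sumeq: "(\<Sum>i<n. indicator B (y i) - r * indicator C (y i)) = (\<Sum>i<n. indicator B (y i)) - r * (\<Sum>i<n. indicator C (y i) :: real)" for B C r
      by (simp add: sum_subtractf sum_distrib_left)
    have "real a0 / real c0 < measure P (B0 h) / measure P C0 - t/2 \<or> real a1 / real c1 < measure P (B1 h) / measure P C1 - t/2"
      using lt unfolding emp bal by argo
    then show ?thesis
    proof
      assume "real a0 / real c0 < measure P (B0 h) / measure P C0 - t/2"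
      from ratio_aux[OF ac0 this] have "y \<in> F (B0 h) C0"
        unfolding F_def using y by (simp add: sumeq sa0 sc0)
      then show ?thesis by simp
    next
      assume "real a1 / real c1 < measure P (B1 h) / measure P C1 - t/2"
      from ratio_aux[OF ac1 this] have "y \<in> F (B1 h) C1"
        unfolding F_def using y by (simp add: sumeq sa1 sc1)
      then show ?thesis by simp
    qed
  qed
  have sec: "measure ?M (Pair x -` G) \<ge> 1/2" if x: "x \<in> A" for x
  proof -
    have xs: "x \<in> space ?M" using x unfolding A_def by simp
    have secs: "Pair x -` G \<in> sets ?M" using G by (rule sets_Pair1)
    show ?thesis
    proof (cases "H = {}")
      case True
      have "space ?M \<subseteq> Pair x -` G"
        using x assms(6) True xs unfolding A_def G_def by (auto simp: space_pair_measure)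
      then have "measure ?M (space ?M) \<le> measure ?M (Pair x -` G)"
        using secs by (intro M.finite_measure_mono)
      then show ?thesis by (simp add: M.prob_space)
    next
      case False
      note Hne = False
      have bdd1: "bdd_above ((\<lambda>h. bal_risk P h - emp_bal_risk n z h) ` H)" for z
      proof (rule bdd_aboveI[where M=1])
        fix v assume "v \<in> (\<lambda>h. bal_risk P h - emp_bal_risk n z h) ` H"
        then obtain h where "h \<in> H" "v = bal_risk P h - emp_bal_risk n z h" by auto
        then show "v \<le> 1" using balb[of h] emp_bnd[of n z h] by linarith
      qed
      have bdd2: "bdd_above ((\<lambda>h. emp_bal_risk n (snd p) h - emp_bal_risk n (fst p) h) ` H)" for p
      proof (rule bdd_aboveI[where M=1])
        fix v assume "v \<in> (\<lambda>h. emp_bal_risk n (snd p) h - emp_bal_risk n (fst p) h) ` H"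
        then obtain h where "h \<in> H" "v = emp_bal_risk n (snd p) h - emp_bal_risk n (fst p) h" by auto
        then show "v \<le> 1" using emp_bnd[of n "snd p" h] emp_bnd[of n "fst p" h] by linarith
      qed
      obtain h where h: "h \<in> H" and th: "t < bal_risk P h - emp_bal_risk n x h"
        using x less_cSUP_iff[OF False bdd1] unfolding A_def by auto
      have cover: "space ?M \<subseteq> (Pair x -` G) \<union> F (B0 h) C0 \<union> F (B1 h) C1"
      proof
        fix y assume y: "y \<in> space ?M"
        show "y \<in> (Pair x -` G) \<union> F (B0 h) C0 \<union> F (B1 h) C1"
        proof (cases "emp_bal_risk n y h < bal_risk P h - t/2")
          case True
          then show ?thesis using point[OF y h] by auto
        next
          case False
          then have "t/2 < emp_bal_risk n y h - emp_bal_risk n x h" using th by simp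
          then have "\<exists>h'\<in>H. t/2 < emp_bal_risk n (snd (x,y)) h' - emp_bal_risk n (fst (x,y)) h'"
            using h by auto
          then have "t/2 < (SUP h\<in>H. emp_bal_risk n (snd (x,y)) h - emp_bal_risk n (fst (x,y)) h)"
            by (subst less_cSUP_iff[OF Hne bdd2])
          then show ?thesis using xs y unfolding G_def by (auto simp: space_pair_measure)
        qed
      qed
      have "1 = measure ?M (space ?M)" by (simp add: M.prob_space)
      also have "\<dots> \<le> measure ?M ((Pair x -` G) \<union> F (B0 h) C0 \<union> F (B1 h) C1)"
        using cover secs F0[OF h] F1[OF h] by (intro M.finite_measure_mono) auto
      also have "\<dots> \<le> measure ?M ((Pair x -` G) \<union> F (B0 h) C0) + measure ?M (F (B1 h) C1)"
        using secs F0[OF h] F1[OF h] by (intro measure_Un_le) auto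
      also have "\<dots> \<le> measure ?M (Pair x -` G) + measure ?M (F (B0 h) C0) + measure ?M (F (B1 h) C1)"
        using secs F0[OF h] by (simp add: measure_Un_le)
      also have "\<dots> \<le> measure ?M (Pair x -` G) + 1/2" using F0[OF h] F1[OF h] by simp
      finally show ?thesis by simp
    qed
  qed
  have "ennreal (1/2) * emeasure ?M A = (\<integral>\<^sup>+y. ennreal (1/2) * indicator A y \<partial>?M)"
    using A by (simp add: nn_integral_cmult_indicator)
  also have "\<dots> \<le> (\<integral>\<^sup>+y. emeasure ?M (Pair y -` G) \<partial>?M)"
  proof (rule nn_integral_mono)
    fix y assume "y \<in> space ?M"
    show "ennreal (1/2) * indicator A y \<le> emeasure ?M (Pair y -` G)"
    proof (cases "y \<in> A")
      case True
      have "ennreal (1/2) \<le> ennreal (measure ?M (Pair y -` G))" using sec[OF True] by (rule ennreal_leI)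
      then show ?thesis using True by (simp add: M.emeasure_eq_measure)
    qed simp
  qed
  also have "\<dots> = emeasure (?M \<Otimes>\<^sub>M ?M) G"
    by (rule M.emeasure_pair_measure_alt[symmetric, OF G])
  finally have "ennreal (1/2) * emeasure ?M A \<le> emeasure (?M \<Otimes>\<^sub>M ?M) G" .
  moreover have "ennreal (1/2 * measure ?M A) = ennreal (1/2) * ennreal (measure ?M A)"
    by (rule ennreal_mult) auto
  ultimately have "ennreal (1/2 * measure ?M A) \<le> ennreal (measure (?M \<Otimes>\<^sub>M ?M) G)"
    by (simp only: M.emeasure_eq_measure MM.emeasure_eq_measure)
  then have "1/2 * measure ?M A \<le> measure (?M \<Otimes>\<^sub>M ?M) G"
    by (rule ennreal_le_iff[OF measure_nonneg, THEN iffD1])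
  then show ?thesis unfolding A_def G_def by simp
qed

end
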